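(* Let $q\ge3$ be an integer. Let $H_1,H_2$ be groups with $\mathcal{W}(H_1,\gamma_{q-1}(H_1),\gamma_q(H_1))\ne0$ and $\mathrm{W}(H_2,\gamma_{q-1}(H_2))\ne0$. Let $G$ be a group containing subgroups isomorphic to $H_1$ and to $H_2$ which are both retracts of $G$. Then $\mathcal{W}(G,\gamma_{q-1}(G),\gamma_q(G))\ne0$ and $\mathrm{W}(G,\gamma_{q-1}(G))\ne0$.
   Context: $\gamma_1(H)=H$, $\gamma_{k+1}(H)=[H,\gamma_k(H)]$. A subgroup $H\leqslant G$ is a retract if there is a homomorphism $\alpha\colon G\to G$ with $\alpha(G)=H$ and $\alpha|_H=\mathrm{id}_H$. For normal subgroups $L\geqslant N$ of a group $G$: $\mathrm{Q}(N)^G$ homogeneous quasimorphisms on $N$ invariant under $G$-conjugation, $\mathrm{H}^1(N)^G$ $G$-invariant homomorphisms $N\to\mathbb{R}$, $\mathcal{W}(G,L,N)=\mathrm{Q}(N)^G/(\mathrm{H}^1(N)^G+\{\psi|_N:\psi\in\mathrm{Q}(L)^G\})$, $\mathrm{W}(G,N)=\mathcal{W}(G,G,N)$. *)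

theory Defs
  imports Complex_Main "HOL-Algebra.Algebra"
begin

definition comm_subgroup :: "('a, 'm) monoid_scheme \<Rightarrow> 'a set \<Rightarrow> 'a set \<Rightarrow> 'a set" where
  "comm_subgroup G A B = generate G
     {a \<otimes>\<^bsub>G\<^esub> b \<otimes>\<^bsub>G\<^esub> inv\<^bsub>G\<^esub> a \<otimes>\<^bsub>G\<^esub> inv\<^bsub>G\<^esub> b | a b. a \<in> A \<and> b \<in> B}"

text \<open>Lower central series: gamma G 1 = G, gamma G (k+1) = [G, gamma G k]
  (gamma G 0 is also set to G, it is never used).\<close>
fun lcs :: "('a, 'm) monoid_scheme \<Rightarrow> nat \<Rightarrow> 'a set" where
  "lcs G 0 = carrier G"
| "lcs G (Suc k) = (if k = 0 then carrier G else comm_subgroup G (carrier G) (lcs G k))"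

definition inv_hom_qm :: "('a, 'm) monoid_scheme \<Rightarrow> 'a set \<Rightarrow> ('a \<Rightarrow> real) \<Rightarrow> bool" where
  "inv_hom_qm G N \<phi> \<longleftrightarrow>
     (\<exists>D. \<forall>x\<in>N. \<forall>y\<in>N. \<bar>\<phi> (x \<otimes>\<^bsub>G\<^esub> y) - \<phi> x - \<phi> y\<bar> \<le> D)
   \<and> (\<forall>x\<in>N. \<forall>n::int. \<phi> (x [^]\<^bsub>G\<^esub> n) = of_int n * \<phi> x)
   \<and> (\<forall>g\<in>carrier G. \<forall>x\<in>N. \<phi> (g \<otimes>\<^bsub>G\<^esub> x \<otimes>\<^bsub>G\<^esub> inv\<^bsub>G\<^esub> g) = \<phi> x)"

definition inv_hom_real :: "('a, 'm) monoid_scheme \<Rightarrow> 'a set \<Rightarrow> ('a \<Rightarrow> real) \<Rightarrow> bool" where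
  "inv_hom_real G N h \<longleftrightarrow>
     (\<forall>x\<in>N. \<forall>y\<in>N. h (x \<otimes>\<^bsub>G\<^esub> y) = h x + h y)
   \<and> (\<forall>g\<in>carrier G. \<forall>x\<in>N. h (g \<otimes>\<^bsub>G\<^esub> x \<otimes>\<^bsub>G\<^esub> inv\<^bsub>G\<^esub> g) = h x)"

text \<open>W(G,L,N) \<noteq> 0: some element of Q(N)^G is not in H^1(N)^G + Q(L)^G|_N
  (functions on N compared pointwise on N).\<close>
definition W_nonzero :: "('a, 'm) monoid_scheme \<Rightarrow> 'a set \<Rightarrow> 'a set \<Rightarrow> bool" where
  "W_nonzero G L N \<longleftrightarrow> (\<exists>\<psi>. inv_hom_qm G N \<psi> \<and>
     \<not> (\<exists>h \<phi>. inv_hom_real G N h \<and> inv_hom_qm G L \<phi> \<and> (\<forall>x\<in>N. \<psi> x = h x + \<phi> x)))"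

definition is_retract :: "('a, 'm) monoid_scheme \<Rightarrow> 'a set \<Rightarrow> bool" where
  "is_retract G H \<longleftrightarrow> (\<exists>\<alpha> \<in> hom G G. \<alpha> ` carrier G = H \<and> (\<forall>x\<in>H. \<alpha> x = x))"

end

theory Submission
  imports Defs
begin

lemma lcs_carrier: "group G \<Longrightarrow> lcs G k \<subseteq> carrier G"
proof (induction k)
  case 0 then show ?case by simp
next
  case (Suc k)
  show ?case
  proof (cases "k = 0")
    case True then show ?thesis by simp
  next
    case False
    have "{a \<otimes>\<^bsub>G\<^esub> b \<otimes>\<^bsub>G\<^esub> inv\<^bsub>G\<^esub> a \<otimes>\<^bsub>G\<^esub> inv\<^bsub>G\<^esub> b | a b. a \<in> carrier G \<and> b \<in> lcs G k} \<subseteq> carrier G"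
    proof
      fix x assume "x \<in> {a \<otimes>\<^bsub>G\<^esub> b \<otimes>\<^bsub>G\<^esub> inv\<^bsub>G\<^esub> a \<otimes>\<^bsub>G\<^esub> inv\<^bsub>G\<^esub> b | a b. a \<in> carrier G \<and> b \<in> lcs G k}"
      then obtain a b where "a \<in> carrier G" "b \<in> carrier G" "x = a \<otimes>\<^bsub>G\<^esub> b \<otimes>\<^bsub>G\<^esub> inv\<^bsub>G\<^esub> a \<otimes>\<^bsub>G\<^esub> inv\<^bsub>G\<^esub> b"
        using Suc by blast
      then show "x \<in> carrier G" using Suc.prems by (simp add: group.inv_closed group.is_monoid monoid.m_closed)
    qed
    then show ?thesis using False Suc.prems
      by (simp add: comm_subgroup_def group.generate_incl)
  qed
qed

lemma lcs_hom:
  assumes G: "group G" and H: "group H" and f: "f \<in> hom G H"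
  shows "f ` lcs G k \<subseteq> lcs H k"
proof (induction k)
  case 0 then show ?case using f by (auto simp: hom_def)
next
  case (Suc k)
  interpret gh: group_hom G H f using G H f by (simp add: group_hom_def group_hom_axioms_def)
  show ?case
  proof (cases "k = 0")
    case True then show ?thesis using f by (auto simp: hom_def)
  next
    case False
    define S where "S = {a \<otimes>\<^bsub>G\<^esub> b \<otimes>\<^bsub>G\<^esub> inv\<^bsub>G\<^esub> a \<otimes>\<^bsub>G\<^esub> inv\<^bsub>G\<^esub> b | a b. a \<in> carrier G \<and> b \<in> lcs G k}"
    define T where "T = {a \<otimes>\<^bsub>H\<^esub> b \<otimes>\<^bsub>H\<^esub> inv\<^bsub>H\<^esub> a \<otimes>\<^bsub>H\<^esub> inv\<^bsub>H\<^esub> b | a b. a \<in> carrier H \<and> b \<in> lcs H k}"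
    have lc: "lcs G k \<subseteq> carrier G" using lcs_carrier G by blast
    have SG: "S \<subseteq> carrier G" using lc unfolding S_def by auto
    have "f ` S \<subseteq> T"
    proof
      fix y assume "y \<in> f ` S"
      then obtain a b where ab: "a \<in> carrier G" "b \<in> lcs G k"
        "y = f (a \<otimes>\<^bsub>G\<^esub> b \<otimes>\<^bsub>G\<^esub> inv\<^bsub>G\<^esub> a \<otimes>\<^bsub>G\<^esub> inv\<^bsub>G\<^esub> b)" unfolding S_def by auto
      have bG: "b \<in> carrier G" using ab lc by auto
      have "y = f a \<otimes>\<^bsub>H\<^esub> f b \<otimes>\<^bsub>H\<^esub> inv\<^bsub>H\<^esub> f a \<otimes>\<^bsub>H\<^esub> inv\<^bsub>H\<^esub> f b"
        using ab bG by simp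
      moreover have "f b \<in> lcs H k" using Suc ab by auto
      moreover have "f a \<in> carrier H" using ab by simp
      ultimately show "y \<in> T" unfolding T_def by blast
    qed
    then have "f ` generate G S \<subseteq> generate H T"
      using gh.generate_img[OF SG] gh.H.mono_generate[OF \<open>f ` S \<subseteq> T\<close>] by simp
    then show ?thesis using False by (simp add: comm_subgroup_def S_def T_def)
  qed
qed

lemma transfer_W:
  assumes G: "group G" and H: "group H" and b: "\<beta> \<in> hom G H" and s: "s \<in> hom H G"
    and bs: "\<And>x. x \<in> carrier H \<Longrightarrow> \<beta> (s x) = x"
    and NG: "NG \<subseteq> carrier G" and NH: "NH \<subseteq> carrier H" and LH: "LH \<subseteq> carrier H"
    and bN: "\<beta> ` NG \<subseteq> NH" and sN: "s ` NH \<subseteq> NG" and sL: "s ` LH \<subseteq> LG"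
    and W: "W_nonzero H LH NH"
  shows "W_nonzero G LG NG"
proof -
  interpret gb: group_hom G H \<beta> using G H b by (simp add: group_hom_def group_hom_axioms_def)
  interpret gs: group_hom H G s using G H s by (simp add: group_hom_def group_hom_axioms_def)
  obtain \<psi> where q: "inv_hom_qm H NH \<psi>" and nq: "\<not> (\<exists>h \<phi>. inv_hom_real H NH h \<and> inv_hom_qm H LH \<phi> \<and> (\<forall>x\<in>NH. \<psi> x = h x + \<phi> x))"
    using W unfolding W_nonzero_def by blast
  obtain D where D: "\<forall>x\<in>NH. \<forall>y\<in>NH. \<bar>\<psi> (x \<otimes>\<^bsub>H\<^esub> y) - \<psi> x - \<psi> y\<bar> \<le> D"
    using q unfolding inv_hom_qm_def by blast
  have q2: "\<forall>x\<in>NH. \<forall>n::int. \<psi> (x [^]\<^bsub>H\<^esub> n) = of_int n * \<psi> x"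
   and q3: "\<forall>g\<in>carrier H. \<forall>x\<in>NH. \<psi> (g \<otimes>\<^bsub>H\<^esub> x \<otimes>\<^bsub>H\<^esub> inv\<^bsub>H\<^esub> g) = \<psi> x"
    using q unfolding inv_hom_qm_def by auto
  have "inv_hom_qm G NG (\<lambda>x. \<psi> (\<beta> x))"
    unfolding inv_hom_qm_def
  proof (intro conjI ballI allI exI)
    fix x y assume xy: "x \<in> NG" "y \<in> NG"
    then have "x \<in> carrier G" "y \<in> carrier G" "\<beta> x \<in> NH" "\<beta> y \<in> NH" using NG bN by auto
    then show "\<bar>\<psi> (\<beta> (x \<otimes>\<^bsub>G\<^esub> y)) - \<psi> (\<beta> x) - \<psi> (\<beta> y)\<bar> \<le> D" using D by simp
  next
    fix x and n :: int assume x: "x \<in> NG"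
    then have "x \<in> carrier G" "\<beta> x \<in> NH" using NG bN by auto
    then show "\<psi> (\<beta> (x [^]\<^bsub>G\<^esub> n)) = of_int n * \<psi> (\<beta> x)" using q2 gb.hom_int_pow by simp
  next
    fix g x assume g: "g \<in> carrier G" and x: "x \<in> NG"
    then have "x \<in> carrier G" "\<beta> x \<in> NH" using NG bN by auto
    then show "\<psi> (\<beta> (g \<otimes>\<^bsub>G\<^esub> x \<otimes>\<^bsub>G\<^esub> inv\<^bsub>G\<^esub> g)) = \<psi> (\<beta> x)" using q3 g by simp
  qed
  moreover have "\<not> (\<exists>h \<phi>. inv_hom_real G NG h \<and> inv_hom_qm G LG \<phi> \<and> (\<forall>x\<in>NG. \<psi> (\<beta> x) = h x + \<phi> x))"
  proof
    assume "\<exists>h \<phi>. inv_hom_real G NG h \<and> inv_hom_qm G LG \<phi> \<and> (\<forall>x\<in>NG. \<psi> (\<beta> x) = h x + \<phi> x)"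
    then obtain h \<phi> where h: "inv_hom_real G NG h" and p: "inv_hom_qm G LG \<phi>"
      and e: "\<forall>x\<in>NG. \<psi> (\<beta> x) = h x + \<phi> x" by blast
    obtain E where E: "\<forall>x\<in>LG. \<forall>y\<in>LG. \<bar>\<phi> (x \<otimes>\<^bsub>G\<^esub> y) - \<phi> x - \<phi> y\<bar> \<le> E"
      using p unfolding inv_hom_qm_def by blast
    have p2: "\<forall>x\<in>LG. \<forall>n::int. \<phi> (x [^]\<^bsub>G\<^esub> n) = of_int n * \<phi> x"
     and p3: "\<forall>g\<in>carrier G. \<forall>x\<in>LG. \<phi> (g \<otimes>\<^bsub>G\<^esub> x \<otimes>\<^bsub>G\<^esub> inv\<^bsub>G\<^esub> g) = \<phi> x"
      using p unfolding inv_hom_qm_def by auto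
    have h1: "\<forall>x\<in>NG. \<forall>y\<in>NG. h (x \<otimes>\<^bsub>G\<^esub> y) = h x + h y"
     and h2: "\<forall>g\<in>carrier G. \<forall>x\<in>NG. h (g \<otimes>\<^bsub>G\<^esub> x \<otimes>\<^bsub>G\<^esub> inv\<^bsub>G\<^esub> g) = h x"
      using h unfolding inv_hom_real_def by auto
    have "inv_hom_real H NH (\<lambda>x. h (s x))"
      unfolding inv_hom_real_def
    proof (intro conjI ballI)
      fix x y assume "x \<in> NH" "y \<in> NH"
      then have "x \<in> carrier H" "y \<in> carrier H" "s x \<in> NG" "s y \<in> NG" using NH sN by auto
      then show "h (s (x \<otimes>\<^bsub>H\<^esub> y)) = h (s x) + h (s y)" using h1 by simp
    next
      fix g x assume g: "g \<in> carrier H" and "x \<in> NH"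
      then have "x \<in> carrier H" "s x \<in> NG" using NH sN by auto
      then show "h (s (g \<otimes>\<^bsub>H\<^esub> x \<otimes>\<^bsub>H\<^esub> inv\<^bsub>H\<^esub> g)) = h (s x)" using h2 g by simp
    qed
    moreover have "inv_hom_qm H LH (\<lambda>x. \<phi> (s x))"
      unfolding inv_hom_qm_def
    proof (intro conjI ballI allI exI)
      fix x y assume xy: "x \<in> LH" "y \<in> LH"
      then have "x \<in> carrier H" "y \<in> carrier H" "s x \<in> LG" "s y \<in> LG" using LH sL by auto
      then show "\<bar>\<phi> (s (x \<otimes>\<^bsub>H\<^esub> y)) - \<phi> (s x) - \<phi> (s y)\<bar> \<le> E" using E by simp
    next
      fix x and n :: int assume x: "x \<in> LH"
      then have "x \<in> carrier H" "s x \<in> LG" using LH sL by auto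
      then show "\<phi> (s (x [^]\<^bsub>H\<^esub> n)) = of_int n * \<phi> (s x)" using p2 gs.hom_int_pow by simp
    next
      fix g x assume g: "g \<in> carrier H" and x: "x \<in> LH"
      then have "x \<in> carrier H" "s x \<in> LG" using LH sL by auto
      then show "\<phi> (s (g \<otimes>\<^bsub>H\<^esub> x \<otimes>\<^bsub>H\<^esub> inv\<^bsub>H\<^esub> g)) = \<phi> (s x)" using p3 g by simp
    qed
    moreover have "\<forall>x\<in>NH. \<psi> x = h (s x) + \<phi> (s x)"
    proof
      fix x assume "x \<in> NH"
      then have "x \<in> carrier H" "s x \<in> NG" using NH sN by auto
      then show "\<psi> x = h (s x) + \<phi> (s x)" using e bs by metis
    qed
    ultimately show False using nq by blast
  qed
  ultimately show ?thesis unfolding W_nonzero_def by blast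
qed

lemma retract_maps:
  fixes G :: "('c, 'm) monoid_scheme" and H :: "('b, 'n) monoid_scheme"
  assumes G: "group G" and H: "group H" and K: "subgroup K G"
    and iso: "G\<lparr>carrier := K\<rparr> \<cong> H" and r: "is_retract G K"
  shows "\<exists>\<beta> s. \<beta> \<in> hom G H \<and> s \<in> hom H G \<and> (\<forall>x\<in>carrier H. \<beta> (s x) = x)"
proof -
  obtain f where f: "f \<in> iso (G\<lparr>carrier := K\<rparr>) H" using iso unfolding is_iso_def by blast
  obtain \<alpha> where a: "\<alpha> \<in> hom G G" "\<alpha> ` carrier G = K" "\<forall>x\<in>K. \<alpha> x = x"
    using r unfolding is_retract_def by blast
  have GK: "group (G\<lparr>carrier := K\<rparr>)" using G K by (simp add: subgroup.subgroup_is_group)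
  have a2: "\<alpha> \<in> hom G (G\<lparr>carrier := K\<rparr>)" using a(1,2) by (auto simp: hom_def)
  have fh: "f \<in> hom (G\<lparr>carrier := K\<rparr>) H" using f by (simp add: iso_def)
  define s where "s = inv_into K f"
  have si: "s \<in> iso H (G\<lparr>carrier := K\<rparr>)"
    using group.iso_set_sym[OF GK f] by (simp add: s_def)
  then have sh: "s \<in> hom H (G\<lparr>carrier := K\<rparr>)" by (simp add: iso_def)
  have sh2: "s \<in> hom H G" using sh subgroup.subset[OF K] by (auto simp: hom_def)
  have bh: "(f \<circ> \<alpha>) \<in> hom G H" using a2 fh hom_compose by blast
  have bij: "bij_betw f K (carrier H)" using f by (simp add: iso_def)
  have "\<forall>x\<in>carrier H. (f \<circ> \<alpha>) (s x) = x"
  proof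
    fix x assume x: "x \<in> carrier H"
    have "s x \<in> K" using sh x by (auto simp: hom_def)
    then have "\<alpha> (s x) = s x" using a(3) by blast
    then show "(f \<circ> \<alpha>) (s x) = x" using x bij by (simp add: s_def bij_betw_inv_into_right)
  qed
  then show ?thesis using bh sh2 by blast
qed

theorem proposition11p22:
  fixes q :: nat and H1 :: "'a monoid" and H2 :: "'b monoid" and G :: "'c monoid"
  assumes "q \<ge> 3"
    and "group H1" and "group H2" and "group G"
    and "W_nonzero H1 (lcs H1 (q - 1)) (lcs H1 q)"
    and "W_nonzero H2 (carrier H2) (lcs H2 (q - 1))"
    and "\<exists>K1. subgroup K1 G \<and> G\<lparr>carrier := K1\<rparr> \<cong> H1 \<and> is_retract G K1"
    and "\<exists>K2. subgroup K2 G \<and> G\<lparr>carrier := K2\<rparr> \<cong> H2 \<and> is_retract G K2"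
  shows "W_nonzero G (lcs G (q - 1)) (lcs G q) \<and> W_nonzero G (carrier G) (lcs G (q - 1))"
proof
  obtain K1 where K1: "subgroup K1 G" "G\<lparr>carrier := K1\<rparr> \<cong> H1" "is_retract G K1"
    using assms(7) by blast
  obtain b s where bs: "b \<in> hom G H1" "s \<in> hom H1 G" "\<forall>x\<in>carrier H1. b (s x) = x"
    using retract_maps[OF assms(4) assms(2) K1] by blast
  have bs3: "\<And>x. x \<in> carrier H1 \<Longrightarrow> b (s x) = x" using bs(3) by blast
  show "W_nonzero G (lcs G (q - 1)) (lcs G q)"
    by (rule transfer_W[OF assms(4) assms(2) bs(1,2) bs3 lcs_carrier[OF assms(4)] lcs_carrier[OF assms(2)]
          lcs_carrier[OF assms(2)] lcs_hom[OF assms(4,2) bs(1)] lcs_hom[OF assms(2,4) bs(2)]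
          lcs_hom[OF assms(2,4) bs(2)] assms(5)])
next
  obtain K2 where K2: "subgroup K2 G" "G\<lparr>carrier := K2\<rparr> \<cong> H2" "is_retract G K2"
    using assms(8) by blast
  obtain b s where bs: "b \<in> hom G H2" "s \<in> hom H2 G" "\<forall>x\<in>carrier H2. b (s x) = x"
    using retract_maps[OF assms(4) assms(3) K2] by blast
  have bs3: "\<And>x. x \<in> carrier H2 \<Longrightarrow> b (s x) = x" using bs(3) by blast
  have sc: "s ` carrier H2 \<subseteq> carrier G" using bs(2) by (auto simp: hom_def)
  show "W_nonzero G (carrier G) (lcs G (q - 1))"
    by (rule transfer_W[OF assms(4) assms(3) bs(1,2) bs3 lcs_carrier[OF assms(4)] lcs_carrier[OF assms(3)]
          order_refl lcs_hom[OF assms(4,3) bs(1)] lcs_hom[OF assms(3,4) bs(2)] sc assms(6)])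
qed

end
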